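(* Let $s\in\mathbb N$ and let $\mathbf n\in\mathbb N_0^d$ satisfy $\mathbf n<2^{2m_s+1}\mathbf 1$, $\mathbf n\notin B_{2m_s}$ and $\mathbf n\notin\{0,\dots,2^{m_s}-1\}^d$. Then $\widehat\tau_{\mathbf n}(\Delta^{(m_s)}_{\mathbf l})=0$ for all $\mathbf l<2^{m_s}\mathbf 1$, where $\tau=\tau_F$. The same holds with $\tau$ replaced by $\tau^{\boldsymbol\pi}=\tau_{F^{\boldsymbol\pi}}$ for every sequence $\boldsymbol\pi=(\boldsymbol\pi_s)$ of permutations $\boldsymbol\pi_s$ of $\{0,\dots,2^{m_s}-1\}^d$.
   Context: Fix $d\ge2$. $\mathbb G$ is the dyadic group: sequences $g=(g_k)_{k\ge0}$, $g_k\in\{0,1\}$, coordinatewise addition mod 2, product topology; $\mathbb G^d$ its $d$-th power. For $n\in\mathbb N_0$, $n=\sum_kn_k2^k$, $n_k\in\{0,1\}$. Dyadic interval of rank $k$: $\Delta^{(k)}_m=\{g: g_t=m_{k-1-t},\ 0\le t<k\}$; dyadic cube $\Delta^{(k)}_{\mathbf m}=\prod_l\Delta^{(k)}_{m^l}$. Vector order coordinatewise, $\mathbf 1=(1,\dots,1)$; $B_k=\{\mathbf n\in\mathbb N_0^d: 2^k\mathbf 1\le\mathbf n<2^{k+1}\mathbf 1\}$. Walsh functions $W_n(g)=\prod_k(-1)^{g_kn_k}$, $W_{\mathbf n}(\mathbf g)=\prod_lW_{n^l}(g^l)$; $W^{(k)}_{\mathbf n\mathbf m}$ is the constant value of $W_{\mathbf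 n}$ on $\Delta^{(k)}_{\mathbf m}$ ($\mathbf n,\mathbf m<2^k\mathbf 1$); $R_{k\mathbf 1}:=W_{2^k\mathbf 1}$. Quasimeasure: $\tau$ on dyadic cubes with $\tau(\Delta^{(k)}_{\mathbf m})=\sum_{\boldsymbol\sigma\in\{0,1\}^d}\tau(\Delta^{(k+1)}_{2\mathbf m+\boldsymbol\sigma})$; for a dyadic cube $\Delta$ of rank $r$, $\widehat\tau_{\mathbf n}(\Delta):=\sum_{\Delta^{(k)}_{\mathbf m}\subset\Delta}W^{(k)}_{\mathbf n\mathbf m}\tau(\Delta^{(k)}_{\mathbf m})$ for any $k\ge r$ with $\mathbf n<2^k\mathbf 1$. For nonempty closed $E$, $\tau_E$ is the unique nonnegative quasimeasure with $\tau_E(\mathbb G^d)=1$, $\tau_E(\Delta)=0$ iff $\Delta\cap E=\emptyset$, splitting the value of a cube meeting $E$ equally among its $2^d$ children that meet $E$. Let $m_1=0$, $m_{s+1}=2(2m_s+1)$. $F_s=\bigcup_{\mathbf m,\mathbf m'<2^{m_s}\mathbf 1}\{\mathbf g\in\Delta^{(2m_s)}_{2^{m_s}\mathbf m+\mathbf m'}: R_{2m_s\mathbf 1}(\mathbf g)=W^{(m_s)}_{\mathbf m\mathbf m'}\}$, $F=\bigcap_sF_s$; $F^{\boldsymbol\pi}_s$ is defined likewise with $W^{(m_s)}_{\boldsymbol\pi_s(\mathbf m)\,\mathbf m'}$, and $F^{\boldsymbol\pi}=\bigcap_sF^{\boldsymbol\pi}_s$. *)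

theory Defs
  imports Complex_Main "HOL-Library.Cardinality"
begin

text \<open>Points of the dyadic group G: sequences nat => bool (digit g_k = 1 iff g k).
  Points of G^d: 'd => nat => bool, the dimension d being CARD('d).
  Vectors in N_0^d: 'd => nat.\<close>

type_synonym 'd point = "'d \<Rightarrow> nat \<Rightarrow> bool"
type_synonym 'd vec = "'d \<Rightarrow> nat"

definition cube :: "nat \<Rightarrow> 'd vec \<Rightarrow> 'd point set" where
  "cube k m = {g. \<forall>l. \<forall>t<k. g l t = bit (m l) (k - 1 - t)}"

definition box :: "nat \<Rightarrow> 'd vec set" where
  "box N = {m. \<forall>l. m l < N}"

definition walsh1 :: "nat \<Rightarrow> (nat \<Rightarrow> bool) \<Rightarrow> real" where
  "walsh1 n g = (\<Prod>k\<in>{k. bit n k}. if g k then -1 else 1)"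

definition walsh :: "('d::finite) vec \<Rightarrow> 'd point \<Rightarrow> real" where
  "walsh n g = (\<Prod>l\<in>UNIV. walsh1 (n l) (g l))"

definition cube_pt :: "nat \<Rightarrow> 'd vec \<Rightarrow> 'd point" where
  "cube_pt k m = (\<lambda>l t. t < k \<and> bit (m l) (k - 1 - t))"

text \<open>W^(k)_{n m}: the (constant) value of W_n on the cube of rank k with index m.\<close>
definition walshk :: "nat \<Rightarrow> ('d::finite) vec \<Rightarrow> 'd vec \<Rightarrow> real" where
  "walshk k n m = walsh n (cube_pt k m)"

definition rad :: "nat \<Rightarrow> ('d::finite) point \<Rightarrow> real" where
  "rad k g = walsh (\<lambda>_. 2 ^ k) g"

definition Bblock :: "nat \<Rightarrow> 'd vec set" where
  "Bblock k = {n. \<forall>l. 2 ^ k \<le> n l \<and> n l < 2 ^ (k + 1)}"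

text \<open>Quasimeasures are represented as functions (rank, index vector) => real.
  Fourier coefficient hat tau_n(Delta^(r)_l), computed at the least admissible rank k
  (k >= r and n < 2^k 1); by the quasimeasure property the value does not depend on k.\<close>
definition hat_tau :: "(nat \<Rightarrow> ('d::finite) vec \<Rightarrow> real) \<Rightarrow> 'd vec \<Rightarrow> nat \<Rightarrow> 'd vec \<Rightarrow> real" where
  "hat_tau \<tau> n r l =
     (let k = (LEAST k. r \<le> k \<and> (\<forall>i. n i < 2 ^ k))
      in \<Sum>m\<in>{m. m \<in> box (2 ^ k) \<and> cube k m \<subseteq> cube r l}. walshk k n m * \<tau> k m)"

fun tauE :: "('d::finite) point set \<Rightarrow> nat \<Rightarrow> 'd vec \<Rightarrow> real" where
  "tauE E 0 m = 1"
| "tauE E (Suc k) m =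
     (if cube (Suc k) m \<inter> E = {} then 0
      else tauE E k (\<lambda>i. m i div 2) /
           real (card {\<sigma> \<in> box 2. cube (Suc k) (\<lambda>i. 2 * (m i div 2) + \<sigma> i) \<inter> E \<noteq> {}}))"

text \<open>m_s with m_1 = 0, m_{s+1} = 2(2 m_s + 1); ms s is meaningful for s >= 1.\<close>
primrec ms0 :: "nat \<Rightarrow> nat" where
  "ms0 0 = 0"
| "ms0 (Suc j) = 2 * (2 * ms0 j + 1)"

definition ms :: "nat \<Rightarrow> nat" where
  "ms s = ms0 (s - 1)"

definition Fs_pi :: "nat \<Rightarrow> (('d::finite) vec \<Rightarrow> 'd vec) \<Rightarrow> 'd point set" where
  "Fs_pi s p = (\<Union>m\<in>box (2 ^ ms s). \<Union>m'\<in>box (2 ^ ms s).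
      {g \<in> cube (2 * ms s) (\<lambda>i. 2 ^ ms s * m i + m' i).
         rad (2 * ms s) g = walshk (ms s) (p m) m'})"

definition F_pi :: "(nat \<Rightarrow> ('d::finite) vec \<Rightarrow> 'd vec) \<Rightarrow> 'd point set" where
  "F_pi \<pi> = (\<Inter>s\<in>{1..}. Fs_pi s (\<pi> s))"

definition Fset :: "('d::finite) point set" where
  "Fset = (\<Inter>s\<in>{1..}. Fs_pi s id)"

end

theory Submission
  imports Defs
begin


lemma nat_bit_lt: "(x::nat) < 2 ^ j \<Longrightarrow> \<not> bit x j"
  by (simp add: bit_iff_odd)

lemma nat_bit_ge: "bit (x::nat) j \<Longrightarrow> 2 ^ j \<le> x"
  using nat_bit_lt not_less by blast

primrec idx :: "nat \<Rightarrow> 'd point \<Rightarrow> 'd vec" where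
  "idx 0 g = (\<lambda>i. 0)"
| "idx (Suc k) g = (\<lambda>i. 2 * idx k g i + of_bool (g i k))"

lemma bit_idx: "bit (idx k g i) j \<longleftrightarrow> (j < k \<and> g i (k - 1 - j))"
proof (induction k arbitrary: j)
  case 0 then show ?case by simp
next
  case (Suc k) then show ?case
    by (cases j) (auto simp: bit_0 bit_Suc)
qed

lemma idx_lt: "idx k g i < 2 ^ k"
  by (induction k) auto

lemma idx_box: "idx k g \<in> box (2 ^ k)"
  by (simp add: box_def idx_lt)

definition agree :: "nat \<Rightarrow> 'd point \<Rightarrow> 'd point \<Rightarrow> bool" where
  "agree k g h = (\<forall>i t. t < k \<longrightarrow> g i t = h i t)"

lemma idx_agree: "agree k g h \<Longrightarrow> idx k g = idx k h"
  by (induction k) (auto simp: agree_def fun_eq_iff)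

lemma cube_alt: "cube k m = {g. agree k g (cube_pt k m)}"
  by (auto simp: cube_def agree_def cube_pt_def)

lemma cube_pt_in: "cube_pt k m \<in> cube k m"
  by (simp add: cube_alt agree_def)

lemma in_cube_idx: "g \<in> cube k (idx k g)"
  by (auto simp: cube_def bit_idx)

lemma cube_idx_unique:
  assumes "m \<in> box (2 ^ k)" "g \<in> cube k m" shows "m = idx k g"
proof
  fix i
  show "m i = idx k g i"
  proof (rule bit_eqI)
    fix j
    show "bit (m i) j = bit (idx k g i) j"
    proof (cases "j < k")
      case True
      have e: "k - 1 - (k - 1 - j) = j" using True by simp
      have "g i (k - 1 - j) = bit (m i) (k - 1 - (k - 1 - j))"
        using assms(2) True unfolding cube_def by auto
      then have "g i (k - 1 - j) = bit (m i) j" by (simp only: e)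
      moreover have "bit (idx k g i) j = g i (k - 1 - j)" using True by (simp add: bit_idx)
      ultimately show ?thesis by simp
    next
      case False
      have "m i < 2 ^ j" using assms(1) False unfolding box_def
      proof -
        have "m i < 2 ^ k" using assms(1) unfolding box_def by blast
        also have "(2::nat) ^ k \<le> 2 ^ j" using False by (simp add: power_increasing)
        finally show ?thesis .
      qed
      then show ?thesis using False by (simp add: bit_idx nat_bit_lt)
    qed
  qed
qed

definition trunc :: "nat \<Rightarrow> 'd point \<Rightarrow> 'd point" where
  "trunc k h = (\<lambda>i t. t < k \<and> h i t)"

lemma cube_pt_idx: "cube_pt k (idx k h) = trunc k h"
  by (auto simp: cube_pt_def trunc_def bit_idx fun_eq_iff)

lemma inj_cube_pt: "inj_on (cube_pt k) (box (2 ^ k))"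
  by (metis cube_idx_unique cube_pt_in inj_onI)

definition setdig :: "nat \<Rightarrow> 'd point \<Rightarrow> 'd vec \<Rightarrow> 'd point" where
  "setdig k g \<sigma> = (\<lambda>i t. if t = k then odd (\<sigma> i) else g i t)"

lemma cube_pt_Suc: "cube_pt (Suc k) m = setdig k (cube_pt k (\<lambda>i. m i div 2)) (\<lambda>i. m i mod 2)"
proof -
  have key: "bit (m i) (k - t) = bit (m i div 2) (k - 1 - t)" if "t < k" for i t
    using that by (metis Suc_diff_Suc bit_Suc diff_Suc_1 diff_Suc_eq_diff_pred)
  show ?thesis
  proof (intro ext)
    fix i t
    show "cube_pt (Suc k) m i t = setdig k (cube_pt k (\<lambda>i. m i div 2)) (\<lambda>i. m i mod 2) i t"
    proof (cases "t < k")
      case True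
      then show ?thesis using key[OF True] by (simp add: cube_pt_def setdig_def)
    next
      case False
      then show ?thesis
        by (cases "t = k") (auto simp: cube_pt_def setdig_def bit_0)
    qed
  qed
qed



lemma agree_mono: "agree k g h \<Longrightarrow> j \<le> k \<Longrightarrow> agree j g h"
  by (auto simp: agree_def)

lemma agree_sym: "agree k g h \<Longrightarrow> agree k h g"
  by (auto simp: agree_def)

lemma agree_trans: "agree k g h \<Longrightarrow> agree k h f \<Longrightarrow> agree k g f"
  by (auto simp: agree_def)

lemma agree_refl[simp]: "agree k g g"
  by (auto simp: agree_def)

lemma agree_setdig: "j \<le> k \<Longrightarrow> agree j (setdig k G \<sigma>) G"
  by (auto simp: agree_def setdig_def)

lemma exists_point:
  assumes dep: "\<And>t g h. agree (Suc t) g h \<Longrightarrow> C t g = C t h"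
    and ext: "\<And>t g. \<exists>\<sigma>. C t (setdig t g \<sigma>)"
    and g0: "\<forall>t<k. C t g0"
  shows "\<exists>g. (\<forall>t. C t g) \<and> agree k g g0"
proof -
  define ch where "ch t g = (SOME \<sigma>. C t (setdig t g \<sigma>))" for t g
  have ch: "C t (setdig t g (ch t g))" for t g
    unfolding ch_def using ext by (rule someI_ex)
  define hs where "hs = rec_nat g0 (\<lambda>t h. if t < k then h else setdig t h (ch t h))"
  have hs0: "hs 0 = g0" and hsS: "hs (Suc t) = (if t < k then hs t else setdig t (hs t) (ch t (hs t)))" for t
    by (simp_all add: hs_def)
  have a: "agree k (hs u) g0" for u
  proof (induction u)
    case 0 then show ?case by (simp add: hs0)
  next
    case (Suc u)
    show ?case
    proof (cases "u < k")
      case True then show ?thesis using Suc by (simp add: hsS)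
    next
      case False
      then have "agree k (setdig u (hs u) (ch u (hs u))) (hs u)"
        by (intro agree_setdig) simp
      then show ?thesis using Suc False by (simp add: hsS agree_trans)
    qed
  qed
  have b: "hs u i t = hs (Suc t) i t" if "Suc t \<le> u" for u i t
    using that
  proof (induction u rule: dec_induct)
    case base then show ?case by simp
  next
    case (step u)
    then show ?case by (simp add: hsS setdig_def)
  qed
  define g where "g = (\<lambda>i t. hs (Suc t) i t)"
  have c: "agree (Suc t) g (hs (Suc t))" for t
    unfolding agree_def g_def
  proof (intro allI impI)
    fix i t' assume "t' < Suc t"
    then show "hs (Suc t') i t' = hs (Suc t) i t'"
      using b[of t' "Suc t" i] by simp
  qed
  have "C t g" for t
  proof -
    have "C t g = C t (hs (Suc t))" using c dep by blast
    moreover have "C t (hs (Suc t))"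
    proof (cases "t < k")
      case True
      then have "agree (Suc t) (hs (Suc t)) g0" using a agree_mono by (metis Suc_leI)
      then show ?thesis using dep g0 True by blast
    next
      case False then show ?thesis by (simp add: hsS ch)
    qed
    ultimately show ?thesis by simp
  qed
  moreover have "agree k g g0"
    using a unfolding agree_def g_def by auto
  ultimately show ?thesis by blast
qed

lemma meets_iff:
  assumes dep: "\<And>t g h. agree (Suc t) g h \<Longrightarrow> C t g = C t h"
    and ext: "\<And>t g. \<exists>\<sigma>. C t (setdig t g \<sigma>)"
  shows "(cube k m \<inter> {g. \<forall>t. C t g} \<noteq> {}) = (\<forall>t<k. C t (cube_pt k m))"
proof
  assume "cube k m \<inter> {g. \<forall>t. C t g} \<noteq> {}"
  then obtain g where g: "agree k g (cube_pt k m)" "\<forall>t. C t g" by (auto simp: cube_alt)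
  show "\<forall>t<k. C t (cube_pt k m)"
  proof (intro allI impI)
    fix t assume "t < k"
    then have "agree (Suc t) g (cube_pt k m)" using g(1) agree_mono by (metis Suc_leI)
    then show "C t (cube_pt k m)" using dep g(2) by blast
  qed
next
  assume "\<forall>t<k. C t (cube_pt k m)"
  then obtain g where "\<forall>t. C t g" "agree k g (cube_pt k m)"
    using exists_point[OF dep ext] by blast
  then show "cube k m \<inter> {g. \<forall>t. C t g} \<noteq> {}" by (auto simp: cube_alt)
qed

lemma setdig_mod: "setdig k G (\<lambda>i. x i mod 2) = setdig k G x"
  by (auto simp: setdig_def fun_eq_iff)

lemma tau_zero:
  assumes dep: "\<And>t g h. agree (Suc t) g h \<Longrightarrow> C t g = C t h"
    and ext: "\<And>t g. \<exists>\<sigma>. C t (setdig t g \<sigma>)"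
    and "1 \<le> k" "\<not> (\<forall>t<k. C t (cube_pt k m))"
  shows "tauE {g. \<forall>t. C t g} k m = 0"
proof -
  obtain k' where k: "k = Suc k'" using assms(3) by (cases k) auto
  have "cube k m \<inter> {g. \<forall>t. C t g} = {}" using meets_iff[OF dep ext] assms(4) by blast
  then show ?thesis by (simp add: k)
qed

lemma tau_const:
  assumes dep: "\<And>t g h. agree (Suc t) g h \<Longrightarrow> C t g = C t h"
    and ext: "\<And>t g. \<exists>\<sigma>. C t (setdig t g \<sigma>)"
    and cnt: "\<And>t g. card {\<sigma> \<in> box 2. C t (setdig t g \<sigma>)} = N t"
  shows "\<exists>c. \<forall>m. (\<forall>t<k. C t (cube_pt k m)) \<longrightarrow> tauE {g. \<forall>t. C t g} k m = c"
proof (induction k)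
  case 0 then show ?case by auto
next
  case (Suc k)
  then obtain c where c: "\<And>m. (\<forall>t<k. C t (cube_pt k m)) \<Longrightarrow> tauE {g. \<forall>t. C t g} k m = c"
    by blast
  let ?E = "{g. \<forall>t. C t g}"
  have "tauE ?E (Suc k) m = c / N k" if hm: "\<forall>t<Suc k. C t (cube_pt (Suc k) m)" for m
  proof -
    define p where "p = (\<lambda>i. m i div 2)"
    have meet: "cube (Suc k) m \<inter> ?E \<noteq> {}" using meets_iff[OF dep ext] hm by blast
    have cpS: "cube_pt (Suc k) m = setdig k (cube_pt k p) (\<lambda>i. m i mod 2)"
      by (simp add: cube_pt_Suc p_def)
    have pk: "\<forall>t<k. C t (cube_pt k p)"
    proof (intro allI impI)
      fix t assume t: "t < k"
      have "agree (Suc t) (cube_pt (Suc k) m) (cube_pt k p)"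
        unfolding cpS using t by (intro agree_setdig) simp
      then show "C t (cube_pt k p)" using dep hm t by (metis less_SucI)
    qed
    have "{\<sigma> \<in> box 2. cube (Suc k) (\<lambda>i. 2 * (m i div 2) + \<sigma> i) \<inter> ?E \<noteq> {}}
        = {\<sigma> \<in> box 2. C k (setdig k (cube_pt k p) \<sigma>)}"
    proof (intro Collect_cong conj_cong refl)
      fix \<sigma> :: "'a vec" assume s: "\<sigma> \<in> box 2"
      have e1: "(\<lambda>i. (2 * (m i div 2) + \<sigma> i) div 2) = p" using s by (auto simp: box_def p_def)
      have e2: "(\<lambda>i. (2 * (m i div 2) + \<sigma> i) mod 2) = \<sigma>" using s by (auto simp: box_def)
      have cp: "cube_pt (Suc k) (\<lambda>i. 2 * (m i div 2) + \<sigma> i) = setdig k (cube_pt k p) \<sigma>"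
        by (simp only: cube_pt_Suc e1 e2)
      have "(\<forall>t<Suc k. C t (setdig k (cube_pt k p) \<sigma>)) = C k (setdig k (cube_pt k p) \<sigma>)"
      proof -
        have "C t (setdig k (cube_pt k p) \<sigma>)" if "t < k" for t
        proof -
          have "agree (Suc t) (setdig k (cube_pt k p) \<sigma>) (cube_pt k p)"
            using that by (intro agree_setdig) simp
          then show ?thesis using dep pk that by blast
        qed
        then show ?thesis using less_Suc_eq by auto
      qed
      then show "(cube (Suc k) (\<lambda>i. 2 * (m i div 2) + \<sigma> i) \<inter> ?E \<noteq> {}) = C k (setdig k (cube_pt k p) \<sigma>)"
        using meets_iff[OF dep ext] cp by simp
    qed
    then have "real (card {\<sigma> \<in> box 2. cube (Suc k) (\<lambda>i. 2 * (m i div 2) + \<sigma> i) \<inter> ?E \<noteq> {}}) = real (N k)"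
      using cnt by simp
    moreover have "tauE ?E k (\<lambda>i. m i div 2) = c" using c pk p_def by simp
    ultimately show ?thesis using meet by simp
  qed
  then show ?case by blast
qed



lemma bit_hi_lo:
  fixes a b :: nat
  assumes "b < 2 ^ M"
  shows "bit (2 ^ M * a + b) j = (if j < M then bit b j else bit a (j - M))"
proof (cases "j < M")
  case True
  have "take_bit M (2 ^ M * a + b) = b" using assms by (simp add: take_bit_eq_mod)
  then have "bit (2 ^ M * a + b) j = bit b j"
    using True bit_take_bit_iff[of M "2 ^ M * a + b" j] by simp
  then show ?thesis using True by simp
next
  case False
  have "drop_bit M (2 ^ M * a + b) = a" using assms by (simp add: drop_bit_eq_div)
  then have "bit a (j - M) = bit (2 ^ M * a + b) (M + (j - M))"
    by (metis bit_drop_bit_eq comp_apply)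
  then show ?thesis using False by simp
qed

definition shift :: "nat \<Rightarrow> 'd point \<Rightarrow> 'd point" where
  "shift M g = (\<lambda>i t. g i (t + M))"

lemma cube_split:
  assumes "m' \<in> box (2 ^ M)"
  shows "(g \<in> cube (2 * M) (\<lambda>i. 2 ^ M * m i + m' i)) = (g \<in> cube M m \<and> shift M g \<in> cube M m')"
proof -
  have lt: "m' i < 2 ^ M" for i using assms by (simp add: box_def)
  have A1: "g i t = bit (m i) (M - 1 - t)"
    if H: "\<forall>t<2*M. g i t = bit (2 ^ M * m i + m' i) (2 * M - 1 - t)" and t: "t < M" for i t
  proof -
    have nlt: "\<not> (2 * M - 1 - t < M)" using t by arith
    have e: "2 * M - 1 - t - M = M - 1 - t" by simp
    have "g i t = bit (2 ^ M * m i + m' i) (2 * M - 1 - t)" using H t by simp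
    also have "\<dots> = bit (m i) (2 * M - 1 - t - M)"
      by (simp only: bit_hi_lo[OF lt] nlt if_False)
    finally show ?thesis by (simp only: e)
  qed
  have A2: "g i (t + M) = bit (m' i) (M - 1 - t)"
    if H: "\<forall>t<2*M. g i t = bit (2 ^ M * m i + m' i) (2 * M - 1 - t)" and t: "t < M" for i t
  proof -
    have "g i (t + M) = bit (2 ^ M * m i + m' i) (2 * M - 1 - (t + M))" using H t by simp
    also have "\<dots> = bit (m' i) (M - 1 - t)" using t by (simp add: bit_hi_lo[OF lt])
    finally show ?thesis .
  qed
  have A3: "g i t = bit (2 ^ M * m i + m' i) (2 * M - 1 - t)"
    if H1: "\<forall>t<M. g i t = bit (m i) (M - 1 - t)"
      and H2: "\<forall>t<M. g i (t + M) = bit (m' i) (M - 1 - t)" and t: "t < 2 * M" for i t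
  proof (cases "t < M")
    case True
    have nlt: "\<not> (2 * M - 1 - t < M)" using True by arith
    have e: "2 * M - 1 - t - M = M - 1 - t" by simp
    have "bit (2 ^ M * m i + m' i) (2 * M - 1 - t) = bit (m i) (2 * M - 1 - t - M)"
      by (simp only: bit_hi_lo[OF lt] nlt if_False)
    then show ?thesis using H1 True by (simp only: e)
  next
    case False
    define u where "u = t - M"
    have u: "t = u + M" "u < M" using False t unfolding u_def by arith+
    then show ?thesis using H2 by (simp add: bit_hi_lo[OF lt])
  qed
  have A: "(\<forall>t<2*M. g i t = bit (2 ^ M * m i + m' i) (2 * M - 1 - t)) =
        ((\<forall>t<M. g i t = bit (m i) (M - 1 - t)) \<and> (\<forall>t<M. g i (t + M) = bit (m' i) (M - 1 - t)))" for i
    using A1[of i] A2[of i] A3[of i] by blast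
  show ?thesis unfolding cube_def shift_def using A by auto
qed

definition lo :: "nat \<Rightarrow> 'd point \<Rightarrow> 'd point" where
  "lo M g = trunc M (shift M g)"

lemma bits_pow2: "{j. bit ((2::nat) ^ k) j} = {k}"
  by (auto simp: bit_exp_iff)

lemma walsh1_pow2: "walsh1 (2 ^ k) h = (if h k then -1 else 1)"
  by (simp add: walsh1_def bits_pow2)

lemma rad_eq: "rad k g = (\<Prod>i\<in>UNIV. if g i k then -1 else 1)"
  by (simp add: rad_def walsh_def walsh1_pow2)

lemma Fs_char:
  "(g \<in> Fs_pi s p) = (rad (2 * ms s) g = walsh (p (idx (ms s) g)) (lo (ms s) g))"
proof -
  let ?M = "ms s"
  have "(g \<in> Fs_pi s p) = (\<exists>m\<in>box (2 ^ ?M). \<exists>m'\<in>box (2 ^ ?M).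
           g \<in> cube ?M m \<and> shift ?M g \<in> cube ?M m' \<and> rad (2 * ?M) g = walshk ?M (p m) m')"
    unfolding Fs_pi_def using cube_split by blast
  also have "\<dots> = (rad (2 * ?M) g = walshk ?M (p (idx ?M g)) (idx ?M (shift ?M g)))"
    using cube_idx_unique in_cube_idx idx_box by metis
  also have "\<dots> = (rad (2 * ?M) g = walsh (p (idx ?M g)) (lo ?M g))"
    by (simp add: walshk_def cube_pt_idx lo_def)
  finally show ?thesis .
qed



lemma ms0_strict: "strict_mono ms0"
  by (simp add: strict_mono_Suc_iff)

lemma ms_Suc: "1 \<le> s \<Longrightarrow> ms (Suc s) = 2 * (2 * ms s + 1)"
  by (cases s) (auto simp: ms_def)

lemma ms_mono: "1 \<le> a \<Longrightarrow> a \<le> b \<Longrightarrow> ms a \<le> ms b"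
  unfolding ms_def using ms0_strict by (simp add: strict_mono_less_eq)

lemma ms_inj: "1 \<le> a \<Longrightarrow> 1 \<le> b \<Longrightarrow> ms a = ms b \<Longrightarrow> a = b"
  unfolding ms_def using ms0_strict strict_mono_eq by fastforce

lemma ms_gap: "1 \<le> a \<Longrightarrow> a < s \<Longrightarrow> 2 * ms a < ms s"
proof -
  assume "1 \<le> a" "a < s"
  then have "ms (Suc a) \<le> ms s" by (intro ms_mono) auto
  then show ?thesis using ms_Suc[OF \<open>1 \<le> a\<close>] by simp
qed

lemma ms_gap2: "1 \<le> s \<Longrightarrow> s < a \<Longrightarrow> 4 * ms s + 2 \<le> ms a"
proof -
  assume "1 \<le> s" "s < a"
  then have "ms (Suc s) \<le> ms a" by (intro ms_mono) auto
  then show ?thesis using ms_Suc[OF \<open>1 \<le> s\<close>] by simp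
qed

definition par :: "'d::finite vec \<Rightarrow> real" where
  "par \<sigma> = (\<Prod>i\<in>UNIV. if odd (\<sigma> i) then -1 else 1)"

lemma prod_pm1: "(\<forall>x\<in>A. f x = 1 \<or> f x = -1) \<Longrightarrow> prod f A = 1 \<or> prod f A = (-1::real)"
proof (induction A rule: infinite_finite_induct)
  case (insert x F)
  then have "f x = 1 \<or> f x = -1" "prod f F = 1 \<or> prod f F = -1" by auto
  then show ?case using insert by auto
qed auto

lemma walsh1_pm: "walsh1 n h = 1 \<or> walsh1 n h = -1"
  unfolding walsh1_def by (rule prod_pm1) auto

lemma walsh_pm: "walsh n g = 1 \<or> walsh n g = -1"
  unfolding walsh_def by (rule prod_pm1) (auto simp: walsh1_pm)

lemma rad_setdig: "rad k (setdig k g \<sigma>) = par \<sigma>"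
  by (simp add: rad_eq par_def setdig_def)

lemma prod_upd:
  fixes F :: "'d::finite \<Rightarrow> 'b \<Rightarrow> real"
  shows "(\<Prod>i\<in>UNIV. F i ((\<sigma>(i0 := x)) i)) = F i0 x * (\<Prod>i\<in>UNIV - {i0}. F i (\<sigma> i))"
proof -
  have "(\<Prod>i\<in>UNIV. F i ((\<sigma>(i0 := x)) i)) = F i0 x * (\<Prod>i\<in>UNIV - {i0}. F i ((\<sigma>(i0 := x)) i))"
    by (subst prod.remove[of UNIV i0]) auto
  also have "(\<Prod>i\<in>UNIV - {i0}. F i ((\<sigma>(i0 := x)) i)) = (\<Prod>i\<in>UNIV - {i0}. F i (\<sigma> i))"
    by (rule prod.cong) auto
  finally show ?thesis .
qed

lemma prod_remove': "(\<Prod>i\<in>UNIV. F i) = F i0 * (\<Prod>i\<in>UNIV - {i0}. (F i :: real))" for F :: "'d::finite \<Rightarrow> real"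
  by (subst prod.remove[of UNIV i0]) auto

definition tog :: "'d \<Rightarrow> 'd vec \<Rightarrow> 'd vec" where
  "tog i0 \<sigma> = \<sigma>(i0 := 1 - \<sigma> i0)"

lemma par_tog: "\<sigma> \<in> box 2 \<Longrightarrow> par (tog i0 \<sigma>) = - par \<sigma>"
proof -
  assume s: "\<sigma> \<in> box 2"
  have "par (tog i0 \<sigma>) = (if odd (1 - \<sigma> i0) then -1 else 1) * (\<Prod>i\<in>UNIV - {i0}. if odd (\<sigma> i) then -1 else (1::real))"
    unfolding par_def tog_def by (rule prod_upd[where F = "\<lambda>i x. if odd x then -1 else 1"])
  moreover have "par \<sigma> = (if odd (\<sigma> i0) then -1 else 1) * (\<Prod>i\<in>UNIV - {i0}. if odd (\<sigma> i) then -1 else (1::real))"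
    unfolding par_def by (rule prod_remove')
  moreover have "\<sigma> i0 = 0 \<or> \<sigma> i0 = 1" using s by (auto simp: box_def less_2_cases_iff)
  ultimately show ?thesis by auto
qed

lemma tog_box: "\<sigma> \<in> box 2 \<Longrightarrow> tog i0 \<sigma> \<in> box 2"
  by (auto simp: box_def tog_def)

lemma tog_tog: "\<sigma> \<in> box 2 \<Longrightarrow> tog i0 (tog i0 \<sigma>) = \<sigma>"
proof -
  assume "\<sigma> \<in> box 2"
  then have "\<sigma> i0 = 0 \<or> \<sigma> i0 = 1" by (auto simp: box_def less_2_cases_iff)
  then show ?thesis by (auto simp: tog_def fun_eq_iff)
qed

lemma card_par: "w = 1 \<or> w = -1 \<Longrightarrow> card {\<sigma> \<in> box 2. par (\<sigma> :: 'd::finite vec) = w} = card {\<sigma> \<in> box (2::nat). par (\<sigma> :: 'd vec) = 1}"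
proof -
  assume "w = 1 \<or> w = -1"
  moreover have "card {\<sigma> \<in> box 2. par (\<sigma> :: 'd vec) = -1} = card {\<sigma> \<in> box (2::nat). par (\<sigma> :: 'd vec) = 1}"
  proof -
    have "bij_betw (tog undefined) {\<sigma> \<in> box 2. par (\<sigma> :: 'd vec) = -1} {\<sigma> \<in> box (2::nat). par (\<sigma> :: 'd vec) = 1}"
      by (rule bij_betw_byWitness[where f' = "tog undefined"])
        (simp_all add: tog_tog tog_box par_tog image_subset_iff)
    then show ?thesis by (rule bij_betw_same_card)
  qed
  ultimately show ?thesis by auto
qed

lemma exists_par: "w = 1 \<or> w = -1 \<Longrightarrow> \<exists>\<sigma>. par (\<sigma> :: 'd::finite vec) = w"
proof -
  assume "w = 1 \<or> w = -1"
  moreover have "par (\<lambda>_::'d. 0::nat) = 1" by (simp add: par_def)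
  moreover have "par (tog undefined (\<lambda>_::'d. 0::nat)) = -1"
    by (subst par_tog) (auto simp: box_def par_def)
  ultimately show ?thesis by blast
qed



definition Cp :: "(nat \<Rightarrow> ('d::finite) vec \<Rightarrow> 'd vec) \<Rightarrow> nat \<Rightarrow> 'd point \<Rightarrow> bool" where
  "Cp \<pi> t g = (\<forall>s\<ge>1. 2 * ms s = t \<longrightarrow> g \<in> Fs_pi s (\<pi> s))"

lemma F_pi_eq: "F_pi \<pi> = {g. \<forall>t. Cp \<pi> t g}"
  by (auto simp: F_pi_def Cp_def)

lemma Fset_eq: "Fset = F_pi (\<lambda>_. id)"
  by (simp add: Fset_def F_pi_def)

lemma Cp_iff: "1 \<le> s \<Longrightarrow> Cp \<pi> (2 * ms s) g = (g \<in> Fs_pi s (\<pi> s))"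
  unfolding Cp_def using ms_inj by (metis mult_left_cancel zero_neq_numeral)

lemma Cp_triv: "(\<forall>s\<ge>1. 2 * ms s \<noteq> t) \<Longrightarrow> Cp \<pi> t g"
  unfolding Cp_def by auto

definition Wf :: "nat \<Rightarrow> ('d::finite vec \<Rightarrow> 'd vec) \<Rightarrow> 'd point \<Rightarrow> real" where
  "Wf M p g = walsh (p (idx M g)) (lo M g)"

lemma Wf_agree: "agree (2 * M) g h \<Longrightarrow> Wf M p g = Wf M p h"
proof -
  assume a: "agree (2 * M) g h"
  then have "idx M g = idx M h" by (intro idx_agree) (auto simp: agree_def)
  moreover have "lo M g = lo M h" using a by (auto simp: lo_def trunc_def shift_def agree_def fun_eq_iff)
  ultimately show ?thesis by (simp add: Wf_def)
qed

lemma rad_agree: "(\<forall>i. g i k = h i k) \<Longrightarrow> rad k g = rad k h"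
  by (simp add: rad_eq)

lemma Fs_char': "(g \<in> Fs_pi s p) = (rad (2 * ms s) g = Wf (ms s) p g)"
  by (simp add: Fs_char Wf_def)

lemma Cp_dep: "agree (Suc t) g h \<Longrightarrow> Cp \<pi> t g = Cp \<pi> t h"
proof -
  assume a: "agree (Suc t) g h"
  have "(g \<in> Fs_pi s (\<pi> s)) = (h \<in> Fs_pi s (\<pi> s))" if "2 * ms s = t" for s
  proof -
    have "rad (2 * ms s) g = rad (2 * ms s) h" using a that by (intro rad_agree) (auto simp: agree_def)
    moreover have "Wf (ms s) (\<pi> s) g = Wf (ms s) (\<pi> s) h" using a that by (intro Wf_agree) (auto simp: agree_def)
    ultimately show ?thesis by (simp add: Fs_char')
  qed
  then show ?thesis unfolding Cp_def by auto
qed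

lemma Cp_setdig: "1 \<le> s \<Longrightarrow> Cp \<pi> (2 * ms s) (setdig (2 * ms s) g \<sigma>) = (par \<sigma> = Wf (ms s) (\<pi> s) g)"
proof -
  assume s: "1 \<le> s"
  have "Wf (ms s) (\<pi> s) (setdig (2 * ms s) g \<sigma>) = Wf (ms s) (\<pi> s) g"
    by (intro Wf_agree agree_setdig) simp
  then show ?thesis using s by (simp add: Cp_iff Fs_char' rad_setdig)
qed

lemma Wf_pm: "Wf M p g = 1 \<or> Wf M p g = -1"
  by (simp add: Wf_def walsh_pm)

lemma Cp_ext:
  fixes g :: "('d::finite) point"
  shows "\<exists>\<sigma>. Cp \<pi> t (setdig t g \<sigma>)"
proof (cases "\<exists>s\<ge>1. 2 * ms s = t")
  case True
  then obtain s where s: "1 \<le> s" "t = 2 * ms s" by auto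
  obtain \<sigma> where sg: "par (\<sigma> :: 'd vec) = Wf (ms s) (\<pi> s) g" using exists_par[OF Wf_pm] by blast
  have "Cp \<pi> (2 * ms s) (setdig (2 * ms s) g \<sigma>)" using sg by (rule Cp_setdig[OF s(1), THEN iffD2])
  then show ?thesis unfolding s(2) by blast
next
  case False then show ?thesis using Cp_triv by blast
qed

lemma Cp_cnt:
  fixes g :: "('d::finite) point"
  shows "card {\<sigma> \<in> box 2. Cp \<pi> t (setdig t g \<sigma>)} =
  (if \<exists>s\<ge>1. 2 * ms s = t then card {\<sigma> \<in> box (2::nat). par (\<sigma> :: 'd vec) = 1} else card (box (2::nat) :: 'd vec set))"
proof (cases "\<exists>s\<ge>1. 2 * ms s = t")
  case True
  then obtain s where s: "1 \<le> s" "t = 2 * ms s" by auto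
  have "{\<sigma> \<in> box 2. Cp \<pi> t (setdig t g \<sigma>)} = {\<sigma> \<in> box 2. par \<sigma> = Wf (ms s) (\<pi> s) g}"
    unfolding s(2) by (intro Collect_cong conj_cong refl Cp_setdig[OF s(1)])
  then show ?thesis using True card_par[OF Wf_pm, of "ms s" "\<pi> s" g] by simp
next
  case False
  then have "{\<sigma> \<in> box 2. Cp \<pi> t (setdig t g \<sigma>)} = box 2" using Cp_triv by auto
  then show ?thesis using False by (simp only: if_False)
qed

lemma tau_F:
  fixes \<pi> :: "nat \<Rightarrow> ('d::finite) vec \<Rightarrow> 'd vec"
  shows "\<exists>c. \<forall>m. (\<forall>t<k. Cp \<pi> t (cube_pt k m)) \<longrightarrow> tauE (F_pi \<pi>) k m = c"
  unfolding F_pi_eq by (rule tau_const[OF Cp_dep Cp_ext Cp_cnt]) 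

lemma tau_F0:
  fixes \<pi> :: "nat \<Rightarrow> ('d::finite) vec \<Rightarrow> 'd vec"
  shows "1 \<le> k \<Longrightarrow> \<not> (\<forall>t<k. Cp \<pi> t (cube_pt k m)) \<Longrightarrow> tauE (F_pi \<pi>) k m = 0"
  unfolding F_pi_eq by (rule tau_zero[OF Cp_dep Cp_ext]) 



definition flip1 :: "'d \<Rightarrow> nat \<Rightarrow> 'd point \<Rightarrow> 'd point" where
  "flip1 i j g = g(i := (g i)(j := \<not> g i j))"

lemma flip1_flip1[simp]: "flip1 i j (flip1 i j g) = g"
  by (auto simp: flip1_def fun_eq_iff)

lemma flip1_comm: "flip1 i j (flip1 i' j' g) = flip1 i' j' (flip1 i j g)"
  by (auto simp: flip1_def fun_eq_iff)

lemma flip1_app: "flip1 i j g i' t = (if i' = i \<and> t = j then \<not> g i' t else g i' t)"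
  by (auto simp: flip1_def)

lemma finite_bits: "finite {k. bit (n::nat) k}"
proof (rule finite_subset)
  show "{k. bit n k} \<subseteq> {..<n}"
  proof
    fix k assume "k \<in> {k. bit n k}"
    then have a: "2 ^ k \<le> n" using nat_bit_ge by auto
    have "k < 2 ^ k" by (rule less_exp)
    then have "k < n" using a by (rule less_le_trans)
    then show "k \<in> {..<n}" by simp
  qed
qed simp

lemma walsh1_flip: "walsh1 n (h(j := \<not> h j)) = (if bit n j then - walsh1 n h else walsh1 n h)"
proof (cases "bit n j")
  case True
  let ?B = "{k. bit n k}"
  let ?f = "\<lambda>h k. if h k then -1 else (1::real)"
  have e1: "walsh1 n (h(j := \<not> h j)) = ?f (h(j := \<not> h j)) j * prod (?f (h(j := \<not> h j))) (?B - {j})"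
    unfolding walsh1_def by (rule prod.remove) (use True finite_bits in auto)
  have e2: "prod (?f (h(j := \<not> h j))) (?B - {j}) = prod (?f h) (?B - {j})"
    by (rule prod.cong) auto
  have e3: "walsh1 n h = ?f h j * prod (?f h) (?B - {j})"
    unfolding walsh1_def by (rule prod.remove) (use True finite_bits in auto)
  have e4: "?f (h(j := \<not> h j)) j = - ?f h j" by simp
  show ?thesis unfolding e1 e2 e3 e4 using True by simp
next
  case False
  then have "walsh1 n (h(j := \<not> h j)) = walsh1 n h" unfolding walsh1_def by (intro prod.cong) auto
  then show ?thesis using False by simp
qed

lemma walsh_flip: "walsh n (flip1 i j g) = (if bit (n i) j then - walsh n g else walsh n g)"
proof -
  have "walsh n (flip1 i j g) = walsh1 (n i) ((g i)(j := \<not> g i j)) * (\<Prod>l\<in>UNIV - {i}. walsh1 (n l) (g l))"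
    unfolding walsh_def flip1_def by (rule prod_upd[where F = "\<lambda>l x. walsh1 (n l) x"])
  moreover have "walsh n g = walsh1 (n i) (g i) * (\<Prod>l\<in>UNIV - {i}. walsh1 (n l) (g l))"
    unfolding walsh_def by (rule prod_remove')
  ultimately show ?thesis by (simp add: walsh1_flip)
qed

lemma rad_flip: "rad k (flip1 i j g) = (if j = k then - rad k g else rad k g)"
  unfolding rad_def by (simp add: walsh_flip bit_exp_iff)

lemma agree_flip: "k \<le> j \<Longrightarrow> agree k (flip1 i j g) g"
  by (auto simp: agree_def flip1_app)

lemma idx_flip: "M \<le> j \<Longrightarrow> idx M (flip1 i j g) = idx M g"
  by (rule idx_agree[OF agree_flip])

lemma lo_flip1: "M \<le> j \<Longrightarrow> j < 2 * M \<Longrightarrow> lo M (flip1 i j g) = flip1 i (j - M) (lo M g)"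
  by (auto simp: lo_def trunc_def shift_def flip1_app fun_eq_iff)

lemma lo_flip2: "2 * M \<le> j \<Longrightarrow> lo M (flip1 i j g) = lo M g"
  by (auto simp: lo_def trunc_def shift_def flip1_app fun_eq_iff)

lemma Wf_flip1: "M \<le> j \<Longrightarrow> j < 2 * M \<Longrightarrow>
  Wf M p (flip1 i j g) = (if bit (p (idx M g) i) (j - M) then - Wf M p g else Wf M p g)"
  by (simp add: Wf_def idx_flip lo_flip1 walsh_flip)

lemma Wf_flip2: "2 * M \<le> j \<Longrightarrow> Wf M p (flip1 i j g) = Wf M p g"
  by (simp add: Wf_def idx_flip lo_flip2)

lemma trunc_flip: "j < K \<Longrightarrow> trunc K (flip1 i j g) = flip1 i j (trunc K g)"
  by (auto simp: trunc_def flip1_app fun_eq_iff)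

lemma sum_invol_zero:
  assumes "\<And>x. x \<in> T \<Longrightarrow> \<Phi> x \<in> T" "\<And>x. x \<in> T \<Longrightarrow> \<Phi> (\<Phi> x) = x"
    "\<And>x. x \<in> T \<Longrightarrow> f (\<Phi> x) = - f x"
  shows "sum f T = (0::real)"
proof -
  have b: "bij_betw \<Phi> T T"
    by (rule bij_betw_byWitness[where f' = \<Phi>]) (use assms(1,2) in blast)+
  have "sum f T = sum (f \<circ> \<Phi>) T" using sum.reindex_bij_betw[OF b, of f] by simp
  also have "\<dots> = sum (\<lambda>x. - f x) T" by (rule sum.cong) (simp_all add: assms(3))
  also have "\<dots> = - sum f T" by (simp add: sum_negf)
  finally show ?thesis by simp
qed



lemma exists_high_bit:
  fixes x :: nat
  assumes "2 ^ M \<le> x" "x < 2 ^ K"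
  shows "\<exists>j. M \<le> j \<and> j < K \<and> bit x j"
proof -
  define y where "y = x div 2 ^ M"
  have "y \<noteq> 0" using assms(1) by (simp add: y_def div_eq_0_iff)
  have "\<exists>j. bit y j"
  proof (rule ccontr)
    assume "\<not> (\<exists>j. bit y j)"
    then have "y = 0" by (intro bit_eqI) simp
    then show False using \<open>y \<noteq> 0\<close> by simp
  qed
  then obtain j where j: "bit y j" by blast
  have "bit y j = bit x (M + j)"
    unfolding y_def using bit_drop_bit_eq[of M x] by (simp add: drop_bit_eq_div)
  then have b: "bit x (M + j)" using j by simp
  then have "2 ^ (M + j) \<le> x" by (rule nat_bit_ge)
  then have "(2::nat) ^ (M + j) < 2 ^ K" using assms(2) by (rule le_less_trans)
  then have "M + j < K" using power_less_imp_less_exp[of "2::nat" "M + j" K] by simp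
  then show ?thesis using b by (intro exI[of _ "M + j"]) simp
qed

lemma main:
  fixes s :: nat and n :: "('d::finite) vec" and l :: "'d vec" and \<pi> :: "nat \<Rightarrow> 'd vec \<Rightarrow> 'd vec"
  assumes s1: "s \<ge> 1"
    and nlt: "\<forall>i. n i < 2 ^ (2 * ms s + 1)"
    and nB: "n \<notin> Bblock (2 * ms s)"
    and nbox: "n \<notin> box (2 ^ ms s)"
    and lbox: "l \<in> box (2 ^ ms s)"
  shows "hat_tau (tauE (F_pi \<pi>)) n (ms s) l = 0"
proof -
  define M where "M = ms s"
  define K where "K = (LEAST k. M \<le> k \<and> (\<forall>i. n i < 2 ^ k))"
  have ex: "M \<le> 2 * M + 1 \<and> (\<forall>i. n i < 2 ^ (2 * M + 1))" using nlt M_def by simp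
  have PK: "M \<le> K \<and> (\<forall>i. n i < 2 ^ K)" unfolding K_def by (rule LeastI[of "\<lambda>k. M \<le> k \<and> (\<forall>i. n i < 2 ^ k)", OF ex])
  have K2: "K \<le> 2 * M + 1" unfolding K_def by (rule Least_le[of "\<lambda>k. M \<le> k \<and> (\<forall>i. n i < 2 ^ k)", OF ex])
  obtain i0 where i0: "\<not> bit (n i0) (2 * M)"
  proof -
    obtain i where "\<not> (2 ^ (2 * M) \<le> n i \<and> n i < 2 ^ (2 * M + 1))"
      using nB M_def by (auto simp: Bblock_def)
    then have "n i < 2 ^ (2 * M)" using nlt M_def by auto
    then show ?thesis using that nat_bit_lt by blast
  qed
  obtain i1 j1 where j1: "M \<le> j1" "j1 < K" "bit (n i1) j1"
  proof -
    obtain i where "\<not> n i < 2 ^ M" using nbox M_def by (auto simp: box_def)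
    then have "2 ^ M \<le> n i" by simp
    then show ?thesis using exists_high_bit[of M "n i" K] PK that by blast
  qed
  have MK: "M < K" using j1 by simp
  obtain c where c: "\<And>m. (\<forall>t<K. Cp \<pi> t (cube_pt K m)) \<Longrightarrow> tauE (F_pi \<pi>) K m = c"
    using tau_F[of K \<pi>] by blast
  have z: "\<And>m. \<not> (\<forall>t<K. Cp \<pi> t (cube_pt K m)) \<Longrightarrow> tauE (F_pi \<pi>) K m = 0"
    using tau_F0[of K \<pi>] MK by simp
  define A where "A = {m. m \<in> box (2 ^ K) \<and> cube K m \<subseteq> cube M l}"
  define f where "f P = walsh n P * (if \<forall>t<K. Cp \<pi> t P then c else 0)" for P
  have "hat_tau (tauE (F_pi \<pi>)) n M l = (\<Sum>m\<in>A. walshk K n m * tauE (F_pi \<pi>) K m)"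
    unfolding hat_tau_def Let_def K_def[symmetric] A_def by simp
  also have "\<dots> = (\<Sum>m\<in>A. f (cube_pt K m))"
    by (rule sum.cong) (auto simp: f_def walshk_def c z)
  also have "\<dots> = (\<Sum>P\<in>cube_pt K ` A. f P)"
  proof -
    have inj: "inj_on (cube_pt K) A" by (rule inj_on_subset[OF inj_cube_pt]) (auto simp: A_def)
    show ?thesis by (simp add: sum.reindex[OF inj])
  qed
  also have "\<dots> = 0"
  proof -
    let ?T = "cube_pt K ` A"
    have Tchar: "(P \<in> ?T) = (trunc K P = P \<and> P \<in> cube M l)" for P
    proof
      assume "P \<in> ?T"
      then obtain m where m: "m \<in> A" "P = cube_pt K m" by auto
      have "trunc K P = P" using m(2) by (auto simp: trunc_def cube_pt_def fun_eq_iff)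
      moreover have "P \<in> cube M l" using m cube_pt_in[of K m] by (auto simp: A_def)
      ultimately show "trunc K P = P \<and> P \<in> cube M l" by blast
    next
      assume H: "trunc K P = P \<and> P \<in> cube M l"
      have e: "cube_pt K (idx K P) = P" using H by (simp add: cube_pt_idx)
      have "cube K (idx K P) \<subseteq> cube M l"
      proof
        fix g assume "g \<in> cube K (idx K P)"
        then have "agree K g P" using e by (simp add: cube_alt)
        then have "agree M g P" using MK agree_mono by (metis less_imp_le)
        moreover have "agree M P (cube_pt M l)" using H by (simp add: cube_alt)
        ultimately show "g \<in> cube M l" by (simp add: cube_alt agree_trans)
      qed
      then have "idx K P \<in> A" by (simp add: A_def idx_box)
      then show "P \<in> ?T" using e by (metis image_eqI)
    qed
    define bf where "bf P = (K = 2 * M + 1 \<and> (j1 = 2 * M \<or> bit (\<pi> s (idx M P) i1) (j1 - M)))" for P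
    define \<Phi> where "\<Phi> P = (if bf P then flip1 i0 (2 * M) (flip1 i1 j1 P) else flip1 i1 j1 P)" for P
    have agM: "agree M (\<Phi> P) P" for P
      unfolding \<Phi>_def using j1(1)
      by (auto simp: agree_def flip1_app)
    have idxM: "idx M (\<Phi> P) = idx M P" for P
      by (rule idx_agree[OF agM])
    have bfP: "bf (\<Phi> P) = bf P" for P
      unfolding bf_def idxM ..
    have invol: "\<Phi> (\<Phi> P) = P" for P
      unfolding \<Phi>_def[of "\<Phi> P"] bfP by (simp add: \<Phi>_def flip1_comm)
    have trPhi: "trunc K (\<Phi> P) = \<Phi> P" if "trunc K P = P" for P
    proof (cases "bf P")
      case True
      then have "2 * M < K" by (simp add: bf_def)
      then show ?thesis using True that j1(2) by (simp add: \<Phi>_def trunc_flip)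
    next
      case False
      then show ?thesis using that j1(2) by (simp add: \<Phi>_def trunc_flip)
    qed
    have walshPhi: "walsh n (\<Phi> P) = - walsh n P" for P
      using i0 j1(3) by (simp add: \<Phi>_def walsh_flip)
    have CPhi: "Cp \<pi> t (\<Phi> P) = Cp \<pi> t P" if t: "t < K" for t P
    proof (cases "t < M")
      case True
      then have "agree (Suc t) (\<Phi> P) P" using agM agree_mono by (metis Suc_leI)
      then show ?thesis by (rule Cp_dep)
    next
      case False
      show ?thesis
      proof (cases "\<exists>s'\<ge>1. 2 * ms s' = t")
        case True
        then obtain s' where s': "1 \<le> s'" "2 * ms s' = t" by auto
        have "s' = s"
        proof (rule ccontr)
          assume "s' \<noteq> s"
          then consider "s' < s" | "s < s'" by linarith
          then show False
          proof cases
            case 1 then show False using ms_gap[OF s'(1) 1] s' False M_def by simp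
          next
            case 2 then show False using ms_gap2[OF s1 2] s' t K2 M_def by simp
          qed
        qed
        then have tM: "t = 2 * M" using s' M_def by simp
        then have KM: "K = 2 * M + 1" using t K2 by simp
        have iff: "Cp \<pi> t G = (rad (2 * M) G = Wf M (\<pi> s) G)" for G
          using Cp_iff[OF s1, of \<pi> G] Fs_char'[of G s "\<pi> s"] tM M_def by simp
        have "(rad (2 * M) (\<Phi> P) = Wf M (\<pi> s) (\<Phi> P)) = (rad (2 * M) P = Wf M (\<pi> s) P)"
        proof (cases "j1 = 2 * M")
          case True
          then have "bf P" using KM by (simp add: bf_def)
          then show ?thesis using True i0 j1(3)
            by (simp add: \<Phi>_def rad_flip Wf_flip2)
        next
          case False
          then have j1l: "j1 < 2 * M" using j1(2) KM by simp
          show ?thesis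
          proof (cases "bit (\<pi> s (idx M P) i1) (j1 - M)")
            case True
            then have "bf P" using KM by (simp add: bf_def)
            then show ?thesis using True j1l j1(1)
              by (simp add: \<Phi>_def rad_flip Wf_flip2 Wf_flip1)
          next
            case nb: False
            then have "\<not> bf P" using KM False by (simp add: bf_def)
            then show ?thesis using nb j1l j1(1)
              by (simp add: \<Phi>_def rad_flip Wf_flip1)
          qed
        qed
        then show ?thesis using iff by simp
      next
        case False
        then show ?thesis using Cp_triv by blast
      qed
    qed
    have fPhi: "f (\<Phi> P) = - f P" for P
    proof -
      have "(\<forall>t<K. Cp \<pi> t (\<Phi> P)) = (\<forall>t<K. Cp \<pi> t P)" using CPhi by blast
      then show ?thesis by (simp add: f_def walshPhi)
    qed
    have inT: "\<Phi> P \<in> ?T" if "P \<in> ?T" for P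
    proof -
      have "trunc K P = P" "P \<in> cube M l" using that Tchar by auto
      then have "trunc K (\<Phi> P) = \<Phi> P" "\<Phi> P \<in> cube M l"
        using trPhi agree_trans[OF agM[of P]] by (auto simp: cube_alt)
      then show ?thesis using Tchar by blast
    qed
    show ?thesis by (rule sum_invol_zero[of ?T \<Phi> f]) (auto simp: inT invol fPhi)
  qed
  finally show ?thesis unfolding M_def .
qed


theorem lemma4:
  fixes s :: nat and n :: "('d::finite) vec" and l :: "'d vec"
  assumes "CARD('d) \<ge> 2"
    and "s \<ge> 1"
    and "\<forall>i. n i < 2 ^ (2 * ms s + 1)"
    and "n \<notin> Bblock (2 * ms s)"
    and "n \<notin> box (2 ^ ms s)"
    and "l \<in> box (2 ^ ms s)"
  shows "hat_tau (tauE (Fset :: 'd point set)) n (ms s) l = 0 \<and>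
         (\<forall>\<pi> :: nat \<Rightarrow> 'd vec \<Rightarrow> 'd vec.
            (\<forall>t\<ge>1. bij_betw (\<pi> t) (box (2 ^ ms t)) (box (2 ^ ms t))) \<longrightarrow>
            hat_tau (tauE (F_pi \<pi>)) n (ms s) l = 0)"
proof
  show "hat_tau (tauE (Fset :: 'd point set)) n (ms s) l = 0"
    unfolding Fset_eq by (rule main[OF assms(2-6)])
next
  show "\<forall>\<pi> :: nat \<Rightarrow> 'd vec \<Rightarrow> 'd vec.
            (\<forall>t\<ge>1. bij_betw (\<pi> t) (box (2 ^ ms t)) (box (2 ^ ms t))) \<longrightarrow>
            hat_tau (tauE (F_pi \<pi>)) n (ms s) l = 0"
    using main[OF assms(2-6)] by blast
qed

end
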